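(* Fix a positive integer $m$ and let $1\le j\le m$. Let $\pi\sim\mathcal{S}_{m,n}$ be uniform, and let $T_j$ be the smallest index $t$ such that $\pi_t$ is the $j$-th occurrence of some card type in $\pi$ (equivalently, the largest $t$ such that $\{\pi_1,\dots,\pi_{t-1}\}$ contains no card type with multiplicity at least $j$). If $t=\gamma n^{1-1/j}$, where $\gamma>0$ may depend on $n$, then \[\Pr[T_j>t]=1-O(\gamma^{j})\quad\text{and}\quad \Pr[T_j>t]=O(\gamma^{-j}),\] where the implicit constants may depend on $m$.
   Context: $\mathcal{S}_{m,n}$ is the set of words over the alphabet $[n]=\{1,\dots,n\}$ in which each symbol appears exactly $m$ times; $\pi\sim\mathcal{S}_{m,n}$ denotes a uniformly random element, and $\pi_t$ its $t$-th letter. Asymptotic notation is as $n\to\infty$ with $m$ fixed. *)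

theory Defs
  imports "HOL-Probability.Probability"
begin

definition words :: "nat \<Rightarrow> nat \<Rightarrow> nat list set" where
  "words m n = {w. set w \<subseteq> {1..n} \<and> (\<forall>i\<in>{1..n}. count (mset w) i = m)}"

definition T :: "nat \<Rightarrow> nat list \<Rightarrow> nat" where
  "T j w = (LEAST t. 1 \<le> t \<and> t \<le> length w \<and>
              count (mset (take t w)) (w ! (t - 1)) = j)"

end

theory Submission
  imports Defs "HOL-Combinatorics.Multiset_Permutations"
begin

lemma card_perms_sum:
  assumes "B \<noteq> {#}"
  shows "card (permutations_of_multiset B) = (\<Sum>x\<in>set_mset B. card (permutations_of_multiset (B - {#x#})))"
proof -
  have "card (permutations_of_multiset B) = 
          card (\<Union>x\<in>set_mset B. (#) x ` permutations_of_multiset (B - {#x#}))"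
    by (simp add: permutations_of_multiset_nonempty assms)
  also have "\<dots> = (\<Sum>x\<in>set_mset B. card (permutations_of_multiset (B - {#x#})))"
    by (subst card_UN_disjoint) (auto simp: card_image)
  finally show ?thesis .
qed

lemma mset_set_split0:
  assumes "finite P"
  shows "mset_set P = (if 0 \<in> P then {#0#} else {#}) + image_mset Suc (mset_set {p. Suc p \<in> P})"
proof -
  have fin: "finite {p. Suc p \<in> P}" using assms
    by (metis finite_imageD finite_subset image_Collect_subsetI inj_Suc)
  have e: "P = (P \<inter> {0}) \<union> Suc ` {p. Suc p \<in> P}"
    by (auto, metis image_iff mem_Collect_eq not0_implies_Suc)
  have "mset_set P = mset_set (P \<inter> {0}) + mset_set (Suc ` {p. Suc p \<in> P})"
    by (subst e, rule mset_set_Union) (use assms fin in auto)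
  also have "mset_set (Suc ` {p. Suc p \<in> P}) = image_mset Suc (mset_set {p. Suc p \<in> P})"
    by (simp add: image_mset_mset_set)
  also have "mset_set (P \<inter> {0}) = (if 0 \<in> P then {#0#} else {#})" by auto
  finally show ?thesis .
qed

lemma sub_diff_iff:
  assumes "N \<subseteq># M" "x \<in># M"
  shows "N \<subseteq># M - {#x#} \<longleftrightarrow> x \<in># M - N"
proof
  assume "N \<subseteq># M - {#x#}"
  then have "count N x \<le> count M x - 1" unfolding subseteq_mset_def by (metis count_diff count_single)
  moreover have "0 < count M x" using assms(2) by simp
  ultimately have "count N x < count M x" by linarith
  then show "x \<in># M - N" by (simp add: in_diff_count)
next
  assume a: "x \<in># M - N"
  show "N \<subseteq># M - {#x#}" unfolding subseteq_mset_def
  proof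
    fix y
    show "count N y \<le> count (M - {#x#}) y"
      using a assms(1) unfolding subseteq_mset_def by (cases "y = x") (auto simp: in_diff_count)
  qed
qed

lemma pos_count:
  assumes "P \<subseteq> {..<size A}"
  shows "card {w \<in> permutations_of_multiset A. \<forall>p\<in>P. w!p = f p} =
    (if image_mset f (mset_set P) \<subseteq># A then card (permutations_of_multiset (A - image_mset f (mset_set P))) else 0)"
  using assms
proof (induction "size A" arbitrary: A P f)
  case 0
  then show ?case by auto
next
  case (Suc k)
  define P' where "P' = {p. Suc p \<in> P}"
  define g where "g = f \<circ> Suc"
  define img' where "img' = image_mset g (mset_set P')"
  have finP: "finite P" using Suc.prems finite_subset by blast
  have Anz: "A \<noteq> {#}" using Suc.hyps by auto
  have img: "image_mset f (mset_set P) = (if 0 \<in> P then {#f 0#} else {#}) + img'"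
    unfolding img'_def g_def P'_def by (subst mset_set_split0[OF finP]) (simp add: multiset.map_comp)
  have sizeAx: "x \<in># A \<Longrightarrow> size (A - {#x#}) = k" for x
    using Suc.hyps by (simp add: size_Diff_singleton)
  have P'sub: "x \<in># A \<Longrightarrow> P' \<subseteq> {..<size (A - {#x#})}" for x
    using Suc.prems Suc.hyps sizeAx unfolding P'_def by auto
  have IH: "x \<in># A \<Longrightarrow> card {w \<in> permutations_of_multiset (A - {#x#}). \<forall>p\<in>P'. w!p = g p} =
    (if img' \<subseteq># A - {#x#} then card (permutations_of_multiset (A - {#x#} - img')) else 0)" for x
    unfolding img'_def using Suc.hyps(1)[of "A - {#x#}" P' g] sizeAx P'sub by auto
  have seteq: "{w \<in> permutations_of_multiset A. \<forall>p\<in>P. w!p = f p} =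
    (\<Union>x\<in>set_mset A. (#) x ` {w' \<in> permutations_of_multiset (A - {#x#}). (0 \<in> P \<longrightarrow> x = f 0) \<and> (\<forall>p\<in>P'. w'!p = g p)})"
  proof safe
    fix w assume w: "w \<in> permutations_of_multiset A" "\<forall>p\<in>P. w ! p = f p"
    then obtain x w' where xw: "w = x # w'" using Anz
      by (cases w) (auto simp: permutations_of_multiset_def)
    then show "w \<in> (\<Union>x\<in>set_mset A. (#) x ` {w' \<in> permutations_of_multiset (A - {#x#}). (0 \<in> P \<longrightarrow> x = f 0) \<and> (\<forall>p\<in>P'. w'!p = g p)})"
    proof -
      have "x \<in># A" "w' \<in> permutations_of_multiset (A - {#x#})"
        using w xw by (auto simp: permutations_of_multiset_Cons_iff)
      moreover have "0 \<in> P \<longrightarrow> x = f 0" "\<forall>p\<in>P'. w'!p = g p"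
        using w(2) xw by (auto simp: P'_def g_def)
      ultimately show ?thesis using xw by blast
    qed
  qed (auto simp: permutations_of_multiset_Cons_iff P'_def g_def nth_Cons split: nat.splits)
  have "card {w \<in> permutations_of_multiset A. \<forall>p\<in>P. w!p = f p} =
     (\<Sum>x\<in>set_mset A. card {w' \<in> permutations_of_multiset (A - {#x#}). (0 \<in> P \<longrightarrow> x = f 0) \<and> (\<forall>p\<in>P'. w'!p = g p)})"
    unfolding seteq
    by (subst card_UN_disjoint) (auto simp: card_image)
  also have "\<dots> = (\<Sum>x\<in>set_mset A. if (0 \<in> P \<longrightarrow> x = f 0) then
       (if img' \<subseteq># A - {#x#} then card (permutations_of_multiset (A - {#x#} - img')) else 0) else 0)"
    by (intro sum.cong refl) (auto simp: IH)
  also have "\<dots> = (if image_mset f (mset_set P) \<subseteq># A then card (permutations_of_multiset (A - image_mset f (mset_set P))) else 0)"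
  proof (cases "0 \<in> P")
    case True
    then show ?thesis
      by (simp add: img insert_subset_eq_iff diff_diff_add_mset)
  next
    case False
    have imgs: "image_mset f (mset_set P) = img'" using False img by simp
    show ?thesis
    proof (cases "img' \<subseteq># A")
      case True
      define B where "B = A - img'"
      have "size img' = card P" using img imgs False finP by (metis size_image_mset size_mset_set) 
      moreover have "card P < size A"
      proof -
        have "P \<subseteq> {1..<size A}"
        proof
          fix x assume "x \<in> P"
          then have "x < size A" using Suc.prems by auto
          moreover have "x \<noteq> 0" using \<open>x \<in> P\<close> False by metis
          ultimately show "x \<in> {1..<size A}" by auto
        qed
        then have "card P \<le> card {1..<size A}" by (intro card_mono) auto
        then show ?thesis using Suc.hyps by simp
      qed
      ultimately have "size img' < size A" by simp
      moreover have "size B = size A - size img'" unfolding B_def using True by (simp add: size_Diff_submset)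
      ultimately have Bnz: "B \<noteq> {#}" by auto
      have iff: "x \<in># A \<Longrightarrow> img' \<subseteq># A - {#x#} \<longleftrightarrow> x \<in># B" for x
        unfolding B_def using True by (rule sub_diff_iff)
      have "(\<Sum>x\<in>set_mset A. if (0 \<in> P \<longrightarrow> x = f 0) then
         (if img' \<subseteq># A - {#x#} then card (permutations_of_multiset (A - {#x#} - img')) else 0) else 0)
         = (\<Sum>x\<in>set_mset A. if x \<in># B then card (permutations_of_multiset (B - {#x#})) else 0)"
        using False by (intro sum.cong refl) (auto simp: iff B_def diff_right_commute)
      also have "\<dots> = (\<Sum>x\<in>set_mset B. card (permutations_of_multiset (B - {#x#})))"
      proof -
        have "{x \<in> set_mset A. x \<in># B} = set_mset B" by (auto simp: B_def dest: in_diffD)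
        moreover have "(\<Sum>x\<in>set_mset A. if x \<in># B then card (permutations_of_multiset (B - {#x#})) else 0)
          = (\<Sum>x\<in>{x \<in> set_mset A. x \<in># B}. card (permutations_of_multiset (B - {#x#})))"
          by (rule sum.inter_filter[symmetric]) simp
        ultimately show ?thesis by simp
      qed
      also have "\<dots> = card (permutations_of_multiset B)" using card_perms_sum[OF Bnz] by simp
      finally show ?thesis using True imgs B_def by simp
    next
      case nsub: False
      have "\<not> img' \<subseteq># A - {#x#}" for x using nsub
        by (meson diff_subset_eq_self subset_mset.order_trans)
      then show ?thesis using nsub imgs by simp
    qed
  qed
  finally show ?case .
qed

lemma card_perms_prod:
  assumes "finite S" "set_mset A \<subseteq> S"
  shows "card (permutations_of_multiset A) * (\<Prod>x\<in>S. fact (count A x)) = fact (size A)"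
proof -
  have "(\<Prod>x\<in>S. fact (count A x)) = (\<Prod>x\<in>set_mset A. fact (count A x) :: nat)"
    using assms by (intro prod.mono_neutral_right) (auto simp: not_in_iff)
  then show ?thesis using card_permutations_of_multiset_aux[of A] by simp
qed

definition ff :: "nat \<Rightarrow> nat \<Rightarrow> real" where
  "ff a c = (\<Prod>k<c. (real a - real k))"

lemma fact_ff: "c \<le> a \<Longrightarrow> (fact a :: real) = fact (a - c) * ff a c"
proof (induction c)
  case 0
  then show ?case by (simp add: ff_def)
next
  case (Suc c)
  then have "fact a = (fact (a - c) :: real) * ff a c" by simp
  also have "(fact (a - c) :: real) = fact (a - Suc c) * (real a - real c)"
  proof -
    have eq: "a - c = Suc (a - Suc c)" using Suc.prems by simp
    have "(fact (a-c)::real) = fact (Suc (a - Suc c))" by (subst eq) (rule refl)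
    also have "\<dots> = real (Suc (a - Suc c)) * fact (a - Suc c)" by (rule fact_Suc)
    also have "real (Suc (a - Suc c)) = real a - real c" using Suc.prems eq by (simp add: of_nat_diff)
    finally show ?thesis by (simp add: mult.commute)
  qed
  finally show ?case by (simp add: ff_def mult_ac)
qed

lemma ff_pos: "c \<le> a \<Longrightarrow> ff a c > 0"
  unfolding ff_def by (intro prod_pos) auto

definition MM :: "nat \<Rightarrow> nat \<Rightarrow> nat multiset" where
  "MM m n = repeat_mset m (mset_set {1..n})"

lemma count_MM: "count (MM m n) x = (if x \<in> {1..n} then m else 0)"
  unfolding MM_def by simp

lemma size_MM: "size (MM m n) = m * n"
  unfolding MM_def by simp

lemma set_MM: "set_mset (MM m n) \<subseteq> {1..n}"
  using count_MM[of m n] by (metis count_eq_zero_iff subsetI)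

lemma words_eq: "words m n = permutations_of_multiset (MM m n)"
proof safe
  fix w assume "w \<in> words m n"
  then have "count (mset w) x = count (MM m n) x" for x
    unfolding words_def count_MM by (auto simp: count_eq_zero_iff)
  then show "w \<in> permutations_of_multiset (MM m n)"
    by (simp add: permutations_of_multiset_def multiset_eqI)
next
  fix w assume "w \<in> permutations_of_multiset (MM m n)"
  then have "mset w = MM m n" by (simp add: permutations_of_multiset_def)
  moreover have "set w \<subseteq> {1..n}" using \<open>mset w = MM m n\<close> set_MM[of m n] by (metis set_mset_mset)
  moreover have "\<forall>i\<in>{1..n}. count (mset w) i = m" using \<open>mset w = MM m n\<close> count_MM[of m n] by simp
  ultimately show "w \<in> words m n" by (simp add: words_def)
qed

lemma alg4:
  fixes X Q a Y P b R F :: real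
  shows "X*Q = a \<Longrightarrow> Y*P = b \<Longrightarrow> P = Q*R \<Longrightarrow> b = a*F \<Longrightarrow> X*F*Q = Y*R*Q"
  by (simp add: mult_ac)

lemma ratio_MM:
  assumes "B \<subseteq># MM m n"
  shows "real (card (permutations_of_multiset (MM m n - B))) * ff (m*n) (size B) =
         real (card (permutations_of_multiset (MM m n))) * (\<Prod>x\<in>{1..n}. ff m (count B x))"
proof -
  have cB: "x \<in> {1..n} \<Longrightarrow> count B x \<le> m" for x
    using assms count_MM[of m n x] by (metis mset_subset_eq_count)
  have szB: "size B \<le> m * n" using assms size_MM[of m n] by (metis size_mset_mono)
  have s1: "set_mset (MM m n - B) \<subseteq> {1..n}" using set_MM[of m n] by (meson in_diffD subset_iff)
  have e1: "real (card (permutations_of_multiset (MM m n - B))) * (\<Prod>x\<in>{1..n}. fact (m - count B x))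
      = fact (m*n - size B)"
  proof -
    have "(\<Prod>x\<in>{1..n}. fact (count (MM m n - B) x)) = (\<Prod>x\<in>{1..n}. fact (m - count B x) :: nat)"
      by (intro prod.cong refl) (simp add: count_MM)
    moreover have "size (MM m n - B) = m*n - size B"
      using assms by (simp add: size_Diff_submset size_MM)
    moreover note arg_cong[where f=real, OF card_perms_prod[OF finite_atLeastAtMost s1]]
    ultimately show ?thesis by (simp add: of_nat_prod)
  qed
  have e2: "real (card (permutations_of_multiset (MM m n))) * (\<Prod>x\<in>{1..n}. fact m) = fact (m*n)"
  proof -
    have "(\<Prod>x\<in>{1..n}. fact (count (MM m n) x)) = (\<Prod>x\<in>{1..n}. fact m :: nat)"
      by (intro prod.cong refl) (simp add: count_MM)
    moreover note arg_cong[where f=real, OF card_perms_prod[OF finite_atLeastAtMost set_MM[of m n]]]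
    ultimately show ?thesis by (simp add: of_nat_prod size_MM)
  qed
  have e3: "(\<Prod>x\<in>{1..n}. fact m :: real) = (\<Prod>x\<in>{1..n}. fact (m - count B x)) * (\<Prod>x\<in>{1..n}. ff m (count B x))"
  proof -
    have "(\<Prod>x\<in>{1..n}. fact m :: real) = (\<Prod>x\<in>{1..n}. fact (m - count B x) * ff m (count B x))"
      by (rule prod.cong[OF refl]) (use cB fact_ff in blast)
    then show ?thesis by (simp only: prod.distrib)
  qed
  have e4: "(fact (m*n) :: real) = fact (m*n - size B) * ff (m*n) (size B)"
    using fact_ff[OF szB] .
  have pos: "(\<Prod>x\<in>{1..n}. fact (m - count B x) :: real) > 0" by (intro prod_pos) auto
  have "real (card (permutations_of_multiset (MM m n - B))) * ff (m*n) (size B) * (\<Prod>x\<in>{1..n}. fact (m - count B x))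
     = real (card (permutations_of_multiset (MM m n))) * (\<Prod>x\<in>{1..n}. ff m (count B x)) * (\<Prod>x\<in>{1..n}. fact (m - count B x))"
    by (rule alg4[OF e1 e2 e3 e4])
  then show ?thesis using pos by (subst (asm) mult_right_cancel) auto
qed

definition Pred :: "nat \<Rightarrow> nat list \<Rightarrow> nat \<Rightarrow> bool" where
  "Pred j w t \<longleftrightarrow> 1 \<le> t \<and> t \<le> length w \<and> count (mset (take t w)) (w ! (t - 1)) = j"

lemma T_alt: "T j w = (LEAST t. Pred j w t)"
  unfolding T_def Pred_def by simp

lemma count_take: "count (mset (take t w)) i = card {p. p < min t (length w) \<and> w!p = i}"
proof -
  have "count (mset (take t w)) i = card {p. p < length (take t w) \<and> i = take t w ! p}"
    by (simp add: count_mset count_list_eq_length_filter length_filter_conv_card)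
  also have "{p. p < length (take t w) \<and> i = take t w ! p} = {p. p < min t (length w) \<and> w!p = i}"
    by auto
  finally show ?thesis .
qed

lemma ex_pred:
  assumes "1 \<le> j" "j \<le> count (mset (take s w)) i"
  shows "\<exists>t\<le>s. Pred j w t"
proof -
  define c where "c t = count (mset (take t w)) i" for t
  define t0 where "t0 = (LEAST t. j \<le> c t)"
  have js: "j \<le> c s" using assms c_def by simp
  have t0s: "t0 \<le> s" unfolding t0_def using js by (rule Least_le)
  have jt0: "j \<le> c t0" unfolding t0_def using js by (rule LeastI)
  have c0: "c 0 = 0" by (simp add: c_def)
  have t0nz: "t0 \<noteq> 0"
  proof
    assume "t0 = 0"
    then have "j \<le> 0" using jt0 c0 by simp
    then show False using assms(1) by simp
  qed
  have t0len: "t0 \<le> length w"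
  proof (rule ccontr)
    assume "\<not> t0 \<le> length w"
    then have "length w < t0" by simp
    moreover have "j \<le> c (length w)" using jt0 \<open>length w < t0\<close> by (simp add: c_def)
    ultimately show False unfolding t0_def by (meson not_less_Least)
  qed
  have lt: "c (t0 - 1) < j"
    using not_less_Least[of "t0 - 1" "\<lambda>t. j \<le> c t"] t0nz unfolding t0_def[symmetric] by simp
  have tk: "take t0 w = take (t0 - 1) w @ [w ! (t0 - 1)]"
  proof -
    have l: "t0 - 1 < length w" using t0nz t0len by simp
    have "take t0 w = take (Suc (t0 - 1)) w" using t0nz by simp
    also have "\<dots> = take (t0 - 1) w @ [w ! (t0 - 1)]" using l by (rule take_Suc_conv_app_nth)
    finally show ?thesis .
  qed
  have ct0: "c t0 = c (t0 - 1) + (if w ! (t0 - 1) = i then 1 else 0)"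
    unfolding c_def by (subst tk) auto
  have wi: "w ! (t0 - 1) = i" using ct0 lt jt0 by (auto split: if_splits)
  have "c t0 = j" using ct0 lt jt0 wi by simp
  then have "Pred j w t0" unfolding Pred_def c_def using t0nz t0len wi by simp
  then show ?thesis using t0s by blast
qed

lemma T_le_core:
  assumes "1 \<le> j" "j \<le> count (mset (take s w)) i"
  shows "T j w \<le> s"
proof -
  obtain t where "t \<le> s" "Pred j w t" using ex_pred[OF assms] by blast
  then show ?thesis unfolding T_alt by (meson Least_le le_trans)
qed

lemma T_le_J:
  assumes "1 \<le> j" "J \<subseteq> {..<s}" "J \<subseteq> {..<length w}" "card J = j" "\<forall>p\<in>J. w!p = i"
  shows "T j w \<le> s"
proof -
  have "J \<subseteq> {p. p < min s (length w) \<and> w!p = i}" using assms by auto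
  then have "card J \<le> card {p. p < min s (length w) \<and> w!p = i}" by (intro card_mono) auto
  moreover have "count (mset (take s w)) i = card {p. p < min s (length w) \<and> w!p = i}" by (rule count_take)
  ultimately have "j \<le> count (mset (take s w)) i" using assms by simp
  then show ?thesis using T_le_core assms(1) by blast
qed

lemma T_witness:
  assumes "1 \<le> j" "j \<le> count (mset w) i0" "T j w \<le> s"
  shows "\<exists>i J. J \<subseteq> {..<min s (length w)} \<and> card J = j \<and> (\<forall>p\<in>J. w!p = i)"
proof -
  have "\<exists>t. Pred j w t" using ex_pred[of j "length w" w i0] assms by auto
  then have P: "Pred j w (T j w)" unfolding T_alt by (rule LeastI_ex)
  define i where "i = w ! (T j w - 1)"
  define J where "J = {p. p < T j w \<and> w!p = i}"
  have "card J = count (mset (take (T j w) w)) i" unfolding J_def count_take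
    using P by (simp add: Pred_def min_absorb1)
  also have "\<dots> = j" using P by (simp add: Pred_def i_def)
  finally have "card J = j" .
  moreover have "J \<subseteq> {..<min s (length w)}" using P assms(3) by (auto simp: J_def Pred_def)
  moreover have "\<forall>p\<in>J. w!p = i" by (auto simp: J_def)
  ultimately show ?thesis by blast
qed

lemma prob1:
  assumes "J \<subseteq> {..<m*n}" "card J = j" "j \<le> m" "i \<in> {1..n}"
  shows "real (card {w\<in>words m n. \<forall>p\<in>J. w!p = i}) * ff (m*n) j = real (card (words m n)) * ff m j"
proof -
  define B where "B = replicate_mset j i"
  have img: "image_mset (\<lambda>_. i) (mset_set J) = B" using assms(2) by (simp add: image_mset_const_eq B_def)
  have sub: "B \<subseteq># MM m n" unfolding subseteq_mset_def B_def using assms by (auto simp: count_MM)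
  have "card {w\<in>words m n. \<forall>p\<in>J. w!p = i} = card (permutations_of_multiset (MM m n - B))"
    using pos_count[of J "MM m n" "\<lambda>_. i"] assms(1) img sub by (simp add: words_eq size_MM)
  moreover have "(\<Prod>x\<in>{1..n}. ff m (count B x)) = ff m j"
  proof -
    have "\<And>x. ff m (count B x) = (if x = i then ff m j else 1)" by (simp add: ff_def B_def)
    then show ?thesis using assms(4) by simp
  qed
  moreover have "size B = j" by (simp add: B_def)
  ultimately show ?thesis using ratio_MM[OF sub] by (simp add: words_eq)
qed

lemma prob2:
  assumes "J \<subseteq> {..<m*n}" "J' \<subseteq> {..<m*n}" "J \<inter> J' = {}" "card J = j" "card J' = j" "j \<le> m"
    "i \<in> {1..n}" "i' \<in> {1..n}" "i \<noteq> i'"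
  shows "real (card {w\<in>words m n. (\<forall>p\<in>J. w!p = i) \<and> (\<forall>p\<in>J'. w!p = i')}) * ff (m*n) (2*j)
       = real (card (words m n)) * (ff m j)^2"
proof -
  define f where "f p = (if p \<in> J then i else i')" for p
  define B where "B = replicate_mset j i + replicate_mset j i'"
  have finJ: "finite J" "finite J'" using assms(1,2) finite_subset by blast+
  have seteq: "{w\<in>words m n. (\<forall>p\<in>J. w!p = i) \<and> (\<forall>p\<in>J'. w!p = i')} = {w\<in>words m n. \<forall>p\<in>J \<union> J'. w!p = f p}"
    using assms(3) by (auto simp: f_def)
  have i1: "image_mset f (mset_set J) = replicate_mset j i"
  proof -
    have "image_mset f (mset_set J) = image_mset (\<lambda>_. i) (mset_set J)"
      by (intro image_mset_cong) (simp add: f_def finJ)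
    then show ?thesis using assms(4) by (simp add: image_mset_const_eq)
  qed
  have i2: "image_mset f (mset_set J') = replicate_mset j i'"
  proof -
    have "image_mset f (mset_set J') = image_mset (\<lambda>_. i') (mset_set J')"
      using assms(3) by (intro image_mset_cong) (auto simp: f_def finJ)
    then show ?thesis using assms(5) by (simp add: image_mset_const_eq)
  qed
  have img: "image_mset f (mset_set (J \<union> J')) = B"
    using i1 i2 by (simp add: mset_set_Union[OF finJ assms(3)] B_def)
  have cB: "count B x = (if x = i then j else 0) + (if x = i' then j else 0)" for x
    by (simp add: B_def)
  have sub: "B \<subseteq># MM m n" unfolding subseteq_mset_def using assms cB by (auto simp: count_MM)
  have "card {w\<in>words m n. \<forall>p\<in>J \<union> J'. w!p = f p} = card (permutations_of_multiset (MM m n - B))"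
    using pos_count[of "J \<union> J'" "MM m n" f] assms(1,2) img sub by (simp add: words_eq size_MM)
  moreover have "(\<Prod>x\<in>{1..n}. ff m (count B x)) = (ff m j)^2"
  proof -
    have "\<And>x. ff m (count B x) = (if x = i then ff m j else 1) * (if x = i' then ff m j else 1)"
      using assms(9) by (simp add: ff_def cB)
    then have "(\<Prod>x\<in>{1..n}. ff m (count B x)) = (\<Prod>x\<in>{1..n}. if x = i then ff m j else 1) * (\<Prod>x\<in>{1..n}. if x = i' then ff m j else 1)"
      by (simp add: prod.distrib)
    then show ?thesis using assms(7,8) by (simp add: power2_eq_square)
  qed
  moreover have "size B = 2*j" by (simp add: B_def)
  ultimately show ?thesis using ratio_MM[OF sub] seteq by (simp add: words_eq)
qed

lemma ff_nonneg: "j \<le> a \<Longrightarrow> 0 \<le> ff a j"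
  unfolding ff_def by (intro prod_nonneg) auto

lemma ff_upper_n:
  assumes "1 \<le> n" "j \<le> m"
  shows "ff m j * real n ^ j \<le> ff (m*n) j"
proof -
  have "ff m j * real n ^ j = (\<Prod>k<j. (real m - real k) * real n)"
    by (simp add: ff_def prod.distrib)
  also have "\<dots> \<le> (\<Prod>k<j. real (m*n) - real k)"
  proof (intro prod_mono conjI)
    fix k assume "k \<in> {..<j}"
    then have "k \<le> m" using assms by simp
    then show "0 \<le> (real m - real k) * real n" by simp
    have "real k * 1 \<le> real k * real n" using assms by (intro mult_left_mono) auto
    then show "(real m - real k) * real n \<le> real (m*n) - real k" by (simp add: algebra_simps)
  qed
  finally show ?thesis by (simp add: ff_def)
qed

lemma ff_le_pow:
  assumes "j \<le> a"
  shows "ff a j \<le> real a ^ j"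
proof -
  have "ff a j \<le> (\<Prod>k<j. real a)"
    unfolding ff_def by (intro prod_mono) (use assms in auto)
  then show ?thesis by simp
qed

lemma ff_add: "c \<le> a \<Longrightarrow> ff a (c + d) = ff a c * ff (a - c) d"
proof (induction d)
  case 0
  then show ?case by (simp add: ff_def)
next
  case (Suc d)
  have "ff a (c + Suc d) = ff a (c + d) * (real a - real (c + d))"
    by (simp add: ff_def)
  also have "\<dots> = ff a c * (ff (a - c) d * (real (a - c) - real d))"
    using Suc by (simp add: of_nat_diff)
  also have "ff (a - c) d * (real (a - c) - real d) = ff (a - c) (Suc d)"
    by (simp add: ff_def)
  finally show ?case .
qed

lemma pow_convex:
  fixes x :: real
  assumes "0 \<le> x" "x \<le> 1"
  shows "(1 + x)^j \<le> 1 + (2^j - 1) * x"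
proof (induction j)
  case 0
  then show ?case by simp
next
  case (Suc j)
  have "(1 + x)^Suc j = (1 + x) * (1 + x)^j" by simp
  also have "\<dots> \<le> (1 + x) * (1 + (2^j - 1) * x)"
    using Suc assms by (intro mult_left_mono) auto
  also have "\<dots> = 1 + 2^j * x + (2^j - 1) * x * x" by (simp add: algebra_simps)
  also have "\<dots> \<le> 1 + 2^j * x + (2^j - 1) * x"
  proof -
    have "(2::real)^j \<ge> 1" by simp
    then have "(2^j - 1) * x * x \<le> (2^j - 1) * x * 1"
      using assms by (intro mult_left_mono) auto
    then show ?thesis by simp
  qed
  also have "\<dots> = 1 + (2^Suc j - 1) * x" by (simp add: algebra_simps)
  finally show ?case .
qed

lemma ff_sq:
  assumes "4*j \<le> L" "1 \<le> j"
  shows "(ff L j)^2 \<le> ff L (2*j) * (1 + 2^j * (2 * real j / real L))"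
proof -
  define x where "x = real j / (real L - 2 * real j)"
  have Lpos: "real L - 2 * real j > 0" using assms by simp
  have x0: "0 \<le> x" using Lpos by (simp add: x_def)
  have xL: "x * (real L - 2 * real j) = real j" using Lpos by (simp add: x_def)
  have x2: "x \<le> 2 * real j / real L"
  proof -
    have "real L \<le> 2 * (real L - 2 * real j)" using assms by simp
    then have "real j * real L \<le> real j * (2 * (real L - 2 * real j))" by (intro mult_left_mono) auto
    then have "real j * real L \<le> 2 * real j * (real L - 2 * real j)" by (simp add: algebra_simps)
    then show ?thesis unfolding x_def using Lpos assms by (simp add: field_simps)
  qed
  have x1: "x \<le> 1"
  proof -
    have "2 * real j / real L \<le> 1" using assms by (simp add: field_simps)
    then show ?thesis using x2 by simp
  qed
  have eq2: "ff L (2*j) = ff L j * ff (L - j) j"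
    using ff_add[of j L j] assms by (simp add: mult_2)
  have le1: "ff L j \<le> (1 + x)^j * ff (L - j) j"
  proof -
    have "ff L j \<le> (\<Prod>k<j. (1 + x) * (real (L - j) - real k))"
      unfolding ff_def
    proof (intro prod_mono conjI)
      fix k assume k: "k \<in> {..<j}"
      then show "0 \<le> real L - real k" using assms by simp
      have a: "real (L - j) - real k \<ge> real L - 2 * real j" using k assms by (simp add: of_nat_diff)
      have "x * (real (L - j) - real k) \<ge> x * (real L - 2 * real j)"
        using a x0 by (intro mult_left_mono) auto
      then have "(1 + x) * (real (L - j) - real k) \<ge> (real (L - j) - real k) + real j"
        using xL by (simp add: algebra_simps)
      then show "real L - real k \<le> (1 + x) * (real (L - j) - real k)"
        using assms by (simp add: of_nat_diff)
    qed
    also have "\<dots> = (1 + x)^j * ff (L - j) j" by (simp add: ff_def prod.distrib)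
    finally show ?thesis .
  qed
  have "(ff L j)^2 = ff L j * ff L j" by (simp add: power2_eq_square)
  also have "\<dots> \<le> ff L j * ((1 + x)^j * ff (L - j) j)"
    using le1 ff_nonneg[of j L] assms by (intro mult_left_mono) auto
  also have "\<dots> = ff L (2*j) * (1 + x)^j" using eq2 by (simp add: mult_ac)
  also have "\<dots> \<le> ff L (2*j) * (1 + 2^j * (2 * real j / real L))"
  proof (intro mult_left_mono)
    have "(1 + x)^j \<le> 1 + (2^j - 1) * x" by (rule pow_convex[OF x0 x1])
    also have "\<dots> \<le> 1 + 2^j * x" using x0 by (simp add: algebra_simps)
    also have "\<dots> \<le> 1 + 2^j * (2 * real j / real L)" using x2 by (simp only: add_le_cancel_left mult_le_cancel_left_pos zero_less_power zero_less_numeral)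
    finally show "(1 + x)^j \<le> 1 + 2^j * (2 * real j / real L)" .
    show "0 \<le> ff L (2*j)" using ff_nonneg[of "2*j" L] assms by simp
  qed
  finally show ?thesis .
qed

lemma card_sum_real: "finite A \<Longrightarrow> real (card {x\<in>A. P x}) = (\<Sum>x\<in>A. if P x then 1 else 0)"
  by (simp add: sum.inter_filter[symmetric])

lemma words_finite: "finite (words m n)"
  by (simp add: words_eq)

lemma words_ne: "words m n \<noteq> {}"
  by (simp add: words_eq)

lemma words_length: "w \<in> words m n \<Longrightarrow> length w = m * n"
  by (metis permutations_of_multisetD size_MM size_mset words_eq)

lemma words_count: "w \<in> words m n \<Longrightarrow> i \<in> {1..n} \<Longrightarrow> count (mset w) i = m"
  by (simp add: words_def)

lemma words_set: "w \<in> words m n \<Longrightarrow> set w \<subseteq> {1..n}"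
  by (simp add: words_def)

definition Js :: "nat \<Rightarrow> nat \<Rightarrow> nat set set" where
  "Js j s = {J. J \<subseteq> {..<s} \<and> card J = j}"

lemma Js_finite: "finite (Js j s)"
  unfolding Js_def by (rule finite_subset[of _ "Pow {..<s}"]) auto

lemma Js_card: "card (Js j s) = s choose j"
  unfolding Js_def using n_subsets[of "{..<s}" j] by simp

lemma union_bound:
  assumes "s \<le> m * n" "j \<le> m" "1 \<le> n"
  shows "real (card {w\<in>words m n. \<exists>i\<in>{1..n}. \<exists>J\<in>Js j s. \<forall>p\<in>J. w!p = i})
     \<le> real n * real (s choose j) * (real (card (words m n)) * ff m j / ff (m*n) j)"
proof -
  have "m \<le> m * n" using assms(3) by simp
  then have "j \<le> m * n" using assms(2) by linarith
  then have ffpos: "ff (m*n) j > 0" by (rule ff_pos)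
  have eq: "{w\<in>words m n. \<exists>i\<in>{1..n}. \<exists>J\<in>Js j s. \<forall>p\<in>J. w!p = i}
     = (\<Union>i\<in>{1..n}. \<Union>J\<in>Js j s. {w\<in>words m n. \<forall>p\<in>J. w!p = i})" by auto
  have "card (\<Union>i\<in>{1..n}. \<Union>J\<in>Js j s. {w\<in>words m n. \<forall>p\<in>J. w!p = i})
      \<le> (\<Sum>i\<in>{1..n}. card (\<Union>J\<in>Js j s. {w\<in>words m n. \<forall>p\<in>J. w!p = i}))"
    by (rule card_UN_le) simp
  also have "\<dots> \<le> (\<Sum>i\<in>{1..n}. \<Sum>J\<in>Js j s. card {w\<in>words m n. \<forall>p\<in>J. w!p = i})"
    by (intro sum_mono card_UN_le Js_finite)
  finally have "card {w\<in>words m n. \<exists>i\<in>{1..n}. \<exists>J\<in>Js j s. \<forall>p\<in>J. w!p = i}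
     \<le> (\<Sum>i\<in>{1..n}. \<Sum>J\<in>Js j s. card {w\<in>words m n. \<forall>p\<in>J. w!p = i})"
    unfolding eq .
  then have "real (card {w\<in>words m n. \<exists>i\<in>{1..n}. \<exists>J\<in>Js j s. \<forall>p\<in>J. w!p = i})
     \<le> real (\<Sum>i\<in>{1..n}. \<Sum>J\<in>Js j s. card {w\<in>words m n. \<forall>p\<in>J. w!p = i})"
    by (simp only: of_nat_le_iff)
  also have "\<dots> = (\<Sum>i\<in>{1..n}. \<Sum>J\<in>Js j s. real (card {w\<in>words m n. \<forall>p\<in>J. w!p = i}))"
    by (simp add: of_nat_sum)
  also have "\<dots> = (\<Sum>i\<in>{1..n}. \<Sum>J\<in>Js j s. real (card (words m n)) * ff m j / ff (m*n) j)"
  proof (intro sum.cong refl)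
    fix i J assume i: "i \<in> {1..n}" and J: "J \<in> Js j s"
    have "J \<subseteq> {..<m*n}" "card J = j" using J assms unfolding Js_def by auto
    from prob1[OF this assms(2) i] ffpos
    show "real (card {w\<in>words m n. \<forall>p\<in>J. w!p = i}) = real (card (words m n)) * ff m j / ff (m*n) j"
      by (simp add: field_simps)
  qed
  also have "\<dots> = real n * real (s choose j) * (real (card (words m n)) * ff m j / ff (m*n) j)"
    by (simp add: Js_card)
  finally show ?thesis .
qed

lemma Y_le_binom:
  assumes "w \<in> words m n" "i \<in> {1..n}" "s \<le> m * n"
  shows "card {J\<in>Js j s. \<forall>p\<in>J. w!p = i} \<le> m choose j"
proof -
  define Q where "Q = {p. p < m * n \<and> w!p = i}"
  have cQ: "card Q = m"
  proof -
    have "count (mset w) i = card {p. p < length w \<and> i = w!p}"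
      by (simp add: count_mset count_list_eq_length_filter length_filter_conv_card)
    also have "{p. p < length w \<and> i = w!p} = Q" using words_length[OF assms(1)] by (auto simp: Q_def)
    finally show ?thesis using words_count[OF assms(1,2)] by simp
  qed
  have "{J\<in>Js j s. \<forall>p\<in>J. w!p = i} \<subseteq> {J. J \<subseteq> Q \<and> card J = j}"
    using assms(3) by (auto simp: Js_def Q_def)
  then have "card {J\<in>Js j s. \<forall>p\<in>J. w!p = i} \<le> card {J. J \<subseteq> Q \<and> card J = j}"
    by (intro card_mono) (auto simp: Q_def)
  also have "\<dots> = m choose j" using n_subsets[of Q j] cQ by (simp add: Q_def)
  finally show ?thesis .
qed

lemma second_moment:
  assumes "1 \<le> j" "j \<le> m" "1 \<le> n" "j \<le> s" "s \<le> m*n" "4*j \<le> m*n"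
  shows "real (card {w\<in>words m n. \<forall>i\<in>{1..n}. \<forall>J\<in>Js j s. \<not>(\<forall>p\<in>J. w!p = i)})
    \<le> real (card (words m n)) * (real (m choose j) / (real n * real (s choose j) * (ff m j / ff (m*n) j))
         + 2^j * (2 * real j / real (m*n)))"
proof -
  define W where "W = words m n"
  define N where "N = real (card W)"
  define L where "L = m * n"
  define q1 where "q1 = ff m j / ff L j"
  define q2 where "q2 = (ff m j)^2 / ff L (2*j)"
  define c where "c = real (s choose j)"
  define Cm where "Cm = real (m choose j)"
  define E where "E = 2^j * (2 * real j / real L)"
  define \<mu> where "\<mu> = real n * c * q1"
  have finW: "finite W" by (simp add: W_def words_finite)
  have ffLj: "ff L j > 0" using assms by (intro ff_pos) (simp add: L_def)
  have ffL2j: "ff L (2*j) > 0" using assms by (intro ff_pos) (simp add: L_def)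
  have ffmj: "ff m j > 0" using assms by (intro ff_pos) simp
  have q1pos: "q1 > 0" using ffLj ffmj by (simp add: q1_def)
  have cpos: "c > 0" using assms by (simp add: c_def)
  have mupos: "\<mu> > 0" using q1pos cpos assms by (simp add: \<mu>_def)
  have Cm0: "Cm \<ge> 0" by (simp add: Cm_def)
  have q2le: "q2 \<le> q1^2 * (1 + E)"
  proof -
    have "(ff L j)^2 \<le> ff L (2*j) * (1 + E)" unfolding E_def using ff_sq[of j L] assms by (simp add: L_def)
    then have "(ff m j)^2 * (ff L j)^2 \<le> (ff m j)^2 * (ff L (2*j) * (1 + E))"
      by (intro mult_left_mono) auto
    then show ?thesis unfolding q1_def q2_def using ffLj ffL2j
      by (simp add: field_simps power2_eq_square)
  qed
  define Y :: "nat \<Rightarrow> nat list \<Rightarrow> real" where "Y i w = real (card {J\<in>Js j s. \<forall>p\<in>J. w!p = i})" for i w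
  define X where "X w = (\<Sum>i\<in>{1..n}. Y i w)" for w
  have Ysum: "Y i w = (\<Sum>J\<in>Js j s. if (\<forall>p\<in>J. w!p = i) then 1 else 0)" for i w
    unfolding Y_def by (rule card_sum_real[OF Js_finite])
  have Y0: "Y i w \<ge> 0" for i w by (simp add: Y_def)
  have Yb: "w \<in> W \<Longrightarrow> i \<in> {1..n} \<Longrightarrow> Y i w \<le> Cm" for i w
    unfolding Y_def Cm_def W_def using Y_le_binom[of w m n i s j] assms by simp
  have sumY: "(\<Sum>w\<in>W. Y i w) = c * (N * q1)" if i: "i \<in> {1..n}" for i
  proof -
    have "(\<Sum>w\<in>W. Y i w) = (\<Sum>J\<in>Js j s. \<Sum>w\<in>W. if (\<forall>p\<in>J. w!p = i) then 1 else 0)"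
      unfolding Ysum by (rule sum.swap)
    also have "\<dots> = (\<Sum>J\<in>Js j s. real (card {w\<in>W. \<forall>p\<in>J. w!p = i}))"
      by (intro sum.cong refl) (simp add: card_sum_real[OF finW])
    also have "\<dots> = (\<Sum>J\<in>Js j s. N * q1)"
    proof (intro sum.cong refl)
      fix J assume "J \<in> Js j s"
      then have "J \<subseteq> {..<m*n}" "card J = j" using assms by (auto simp: Js_def)
      from prob1[OF this assms(2) i] ffLj
      show "real (card {w\<in>W. \<forall>p\<in>J. w!p = i}) = N * q1"
        by (simp add: field_simps W_def N_def q1_def L_def)
    qed
    also have "\<dots> = c * (N * q1)" by (simp add: c_def Js_card)
    finally show ?thesis .
  qed
  have sumX: "(\<Sum>w\<in>W. X w) = N * \<mu>"
  proof -
    have "(\<Sum>w\<in>W. X w) = (\<Sum>i\<in>{1..n}. \<Sum>w\<in>W. Y i w)" unfolding X_def by (rule sum.swap)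
    also have "\<dots> = (\<Sum>i\<in>{1..n}. c * (N * q1))" by (intro sum.cong refl) (simp add: sumY)
    finally show ?thesis by (simp add: \<mu>_def)
  qed
  have diag: "(\<Sum>w\<in>W. Y i w * Y i w) \<le> Cm * (c * (N * q1))" if "i \<in> {1..n}" for i
  proof -
    have "(\<Sum>w\<in>W. Y i w * Y i w) \<le> (\<Sum>w\<in>W. Cm * Y i w)"
      using Yb that Y0 by (intro sum_mono mult_right_mono) auto
    also have "\<dots> = Cm * (c * (N * q1))" by (simp add: sum_distrib_left[symmetric] sumY[OF that])
    finally show ?thesis .
  qed
  have pair: "(\<Sum>w\<in>W. Y i w * Y i' w) \<le> c^2 * (N * q2)"
    if i: "i \<in> {1..n}" and i': "i' \<in> {1..n}" and ii: "i \<noteq> i'" for i i'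
  proof -
    have "(\<Sum>w\<in>W. Y i w * Y i' w) = (\<Sum>w\<in>W. \<Sum>J\<in>Js j s. \<Sum>J'\<in>Js j s.
        (if (\<forall>p\<in>J. w!p = i) \<and> (\<forall>p\<in>J'. w!p = i') then 1 else 0))"
    proof -
      have ii: "\<And>a b. (if a then 1 else 0) * (if b then 1 else 0) = (if a \<and> b then 1 else (0::real))" by simp
      show ?thesis unfolding Ysum by (intro sum.cong refl) (simp only: sum_product ii)
    qed
    also have "\<dots> = (\<Sum>J\<in>Js j s. \<Sum>J'\<in>Js j s. \<Sum>w\<in>W.
        (if (\<forall>p\<in>J. w!p = i) \<and> (\<forall>p\<in>J'. w!p = i') then 1 else 0))"
      by (subst sum.swap) (intro sum.cong refl, rule sum.swap)
    also have "\<dots> = (\<Sum>J\<in>Js j s. \<Sum>J'\<in>Js j s.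
        real (card {w\<in>W. (\<forall>p\<in>J. w!p = i) \<and> (\<forall>p\<in>J'. w!p = i')}))"
      by (intro sum.cong refl) (simp add: card_sum_real[OF finW])
    also have "\<dots> \<le> (\<Sum>J\<in>Js j s. \<Sum>J'\<in>Js j s. N * q2)"
    proof (intro sum_mono)
      fix J J' assume J: "J \<in> Js j s" and J': "J' \<in> Js j s"
      show "real (card {w\<in>W. (\<forall>p\<in>J. w!p = i) \<and> (\<forall>p\<in>J'. w!p = i')}) \<le> N * q2"
      proof (cases "J \<inter> J' = {}")
        case True
        have "J \<subseteq> {..<m*n}" "J' \<subseteq> {..<m*n}" "card J = j" "card J' = j"
          using J J' assms by (auto simp: Js_def)
        from prob2[OF this(1,2) True this(3,4) assms(2) i i' ii] ffL2j
        show ?thesis by (simp add: field_simps W_def N_def q2_def L_def)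
      next
        case False
        then have e: "{w\<in>W. (\<forall>p\<in>J. w!p = i) \<and> (\<forall>p\<in>J'. w!p = i')} = {}" using ii by auto
        have "N * q2 \<ge> 0" using ffL2j by (simp add: N_def q2_def)
        then show ?thesis by (subst e) simp
      qed
    qed
    also have "\<dots> = c^2 * (N * q2)" by (simp add: c_def Js_card power2_eq_square)
    finally show ?thesis .
  qed
  have N0: "N \<ge> 0" by (simp add: N_def)
  have q20: "q2 \<ge> 0" using ffL2j by (simp add: q2_def)
  have sumX2: "(\<Sum>w\<in>W. (X w)^2) \<le> real n * (Cm * (c * (N * q1)) + real n * (c^2 * (N * q2)))"
  proof -
    have "(\<Sum>w\<in>W. (X w)^2) = (\<Sum>w\<in>W. \<Sum>i\<in>{1..n}. \<Sum>i'\<in>{1..n}. Y i w * Y i' w)"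
      unfolding X_def by (intro sum.cong refl) (simp add: power2_eq_square sum_product)
    also have "\<dots> = (\<Sum>i\<in>{1..n}. \<Sum>i'\<in>{1..n}. \<Sum>w\<in>W. Y i w * Y i' w)"
      by (subst sum.swap) (intro sum.cong refl, rule sum.swap)
    also have "\<dots> \<le> (\<Sum>i\<in>{1..n}. \<Sum>i'\<in>{1..n}. (if i = i' then Cm * (c * (N * q1)) else 0) + c^2 * (N * q2))"
    proof (intro sum_mono)
      fix i i' assume "i \<in> {1..n}" "i' \<in> {1..n}"
      then show "(\<Sum>w\<in>W. Y i w * Y i' w) \<le> (if i = i' then Cm * (c * (N * q1)) else 0) + c^2 * (N * q2)"
        using diag pair N0 q20 by (cases "i = i'") (auto intro: add_increasing2)
    qed
    also have "\<dots> = real n * (Cm * (c * (N * q1)) + real n * (c^2 * (N * q2)))"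
      by (simp add: sum.distrib algebra_simps)
    finally show ?thesis .
  qed
  have cheb: "real (card {w\<in>W. X w = 0}) * \<mu>^2 \<le> (\<Sum>w\<in>W. (X w - \<mu>)^2)"
  proof -
    have "real (card {w\<in>W. X w = 0}) * \<mu>^2 = (\<Sum>w\<in>{w\<in>W. X w = 0}. (X w - \<mu>)^2)" by simp
    also have "\<dots> \<le> (\<Sum>w\<in>W. (X w - \<mu>)^2)" using finW by (intro sum_mono2) auto
    finally show ?thesis .
  qed
  have expand: "(\<Sum>w\<in>W. (X w - \<mu>)^2) = (\<Sum>w\<in>W. (X w)^2) - N * \<mu>^2"
  proof -
    have "(\<Sum>w\<in>W. (X w - \<mu>)^2) = (\<Sum>w\<in>W. (X w)^2 - 2 * \<mu> * X w + \<mu>^2)"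
      by (intro sum.cong refl) (simp add: power2_eq_square algebra_simps)
    also have "\<dots> = (\<Sum>w\<in>W. (X w)^2) - 2 * \<mu> * (\<Sum>w\<in>W. X w) + N * \<mu>^2"
      by (simp add: sum.distrib sum_subtractf sum_distrib_left N_def)
    finally show ?thesis using sumX by (simp add: power2_eq_square)
  qed
  have sub: "{w\<in>W. \<forall>i\<in>{1..n}. \<forall>J\<in>Js j s. \<not>(\<forall>p\<in>J. w!p = i)} \<subseteq> {w\<in>W. X w = 0}"
  proof safe
    fix w assume w: "w \<in> W" "\<forall>i\<in>{1..n}. \<forall>J\<in>Js j s. \<not>(\<forall>p\<in>J. w!p = i)"
    have "Y i w = 0" if i: "i \<in> {1..n}" for i
    proof -
      have "{J \<in> Js j s. \<forall>p\<in>J. w ! p = i} = {}" using w(2) i by blast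
      then show ?thesis unfolding Y_def by (simp only: card.empty of_nat_0)
    qed
    then show "X w = 0" by (simp add: X_def)
  qed
  have "real (card {w\<in>W. \<forall>i\<in>{1..n}. \<forall>J\<in>Js j s. \<not>(\<forall>p\<in>J. w!p = i)}) \<le> real (card {w\<in>W. X w = 0})"
    using sub finW by (intro of_nat_mono card_mono) auto
  then have key: "real (card {w\<in>W. \<forall>i\<in>{1..n}. \<forall>J\<in>Js j s. \<not>(\<forall>p\<in>J. w!p = i)}) * \<mu>^2
     \<le> real n * (Cm * (c * (N * q1)) + real n * (c^2 * (N * q2))) - N * \<mu>^2"
    using cheb expand sumX2 by (smt (verit) mult_right_mono zero_le_power2)
  have rhs: "real n * (Cm * (c * (N * q1)) + real n * (c^2 * (N * q2))) - N * \<mu>^2 \<le> N * (Cm / \<mu> + E) * \<mu>^2"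
  proof -
    have "real n * (real n * (c^2 * (N * q2))) \<le> real n * (real n * (c^2 * (N * (q1^2 * (1 + E)))))"
      using q2le N0 by (intro mult_left_mono) auto
    also have "\<dots> = N * \<mu>^2 * (1 + E)" by (simp add: \<mu>_def power2_eq_square algebra_simps)
    finally have a: "real n * (real n * (c^2 * (N * q2))) \<le> N * \<mu>^2 * (1 + E)" .
    have b: "real n * (Cm * (c * (N * q1))) = N * Cm * \<mu>" by (simp add: \<mu>_def algebra_simps)
    have "N * (Cm / \<mu> + E) * \<mu>^2 = N * Cm * \<mu> + N * \<mu>^2 * E" using mupos
      by (simp add: field_simps power2_eq_square)
    moreover have "N * \<mu>^2 * (1 + E) = N * \<mu>^2 + N * \<mu>^2 * E" by (simp add: algebra_simps)
    moreover have "real n * (Cm * (c * (N * q1)) + real n * (c^2 * (N * q2))) = real n * (Cm * (c * (N * q1))) + real n * (real n * (c^2 * (N * q2)))"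
      by (simp only: distrib_left)
    ultimately show ?thesis using a b by linarith
  qed
  have "real (card {w\<in>W. \<forall>i\<in>{1..n}. \<forall>J\<in>Js j s. \<not>(\<forall>p\<in>J. w!p = i)}) * \<mu>^2 \<le> N * (Cm / \<mu> + E) * \<mu>^2"
    using key rhs by linarith
  then have "real (card {w\<in>W. \<forall>i\<in>{1..n}. \<forall>J\<in>Js j s. \<not>(\<forall>p\<in>J. w!p = i)}) \<le> N * (Cm / \<mu> + E)"
    using mupos by (simp add: mult_le_cancel_right)
  then show ?thesis by (simp add: W_def N_def Cm_def \<mu>_def c_def q1_def E_def L_def)
qed

lemma card_split_filter:
  assumes "finite A"
  shows "card {x\<in>A. P x} + card {x\<in>A. \<not> P x} = card A"
proof -
  have "card ({x\<in>A. P x} \<union> {x\<in>A. \<not> P x}) = card {x\<in>A. P x} + card {x\<in>A. \<not> P x}"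
    using assms by (intro card_Un_disjoint) auto
  moreover have "{x\<in>A. P x} \<union> {x\<in>A. \<not> P x} = A" by auto
  ultimately show ?thesis by simp
qed

lemma core:
  fixes m j n :: nat and \<gamma> :: real
  assumes j1: "1 \<le> j" and jm: "j \<le> m" and n4: "4*j \<le> n" and g: "\<gamma> > 0"
  defines "t \<equiv> \<gamma> * real n powr (1 - 1 / real j)"
  defines "P \<equiv> measure_pmf.prob (pmf_of_set (words m n)) {w. real (T j w) > t}"
  defines "C \<equiv> 1 + (2 * real j)^j + real (m choose j) * (2 * real j * real m)^j / ff m j
                + 2^(j+1) * real j * real m^j"
  shows "\<bar>1 - P\<bar> \<le> C * \<gamma>^j \<and> P \<le> C * (1/\<gamma>)^j"
proof -
  define a where "a = real n powr (1 - 1 / real j)"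
  define L where "L = m * n"
  define W where "W = words m n"
  define Nw where "Nw = real (card W)"
  define s where "s = nat \<lfloor>t\<rfloor>"
  define s' where "s' = min s L"
  have n1: "1 \<le> n" using n4 j1 by simp
  have m1: "1 \<le> m" using j1 jm by simp
  have "n \<le> m * n" using m1 by simp
  then have L4: "4 * j \<le> L" using n4 unfolding L_def by linarith
  have ffmj: "ff m j > 0" using jm by (rule ff_pos)
  have ffLj: "ff L j > 0" using L4 by (intro ff_pos) simp
  have a1: "1 \<le> a" unfolding a_def using n1 j1 by (intro ge_one_powr_ge_zero) auto
  have aj: "a ^ j = real n ^ (j - 1)"
  proof -
    have "a ^ j = real n powr (real j * (1 - 1 / real j))" unfolding a_def using n1 by (simp add: powr_power)
    also have "real j * (1 - 1 / real j) = real (j - 1)" using j1 by (simp add: field_simps of_nat_diff)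
    also have "real n powr real (j - 1) = real n ^ (j - 1)" using n1 by (simp add: powr_realpow)
    finally show ?thesis .
  qed
  obtain k where jk: "j = Suc k" using j1 by (cases j) auto
  have nj: "real n * real n ^ (j - 1) = real n ^ j" by (simp add: jk)
  have t_def': "t = \<gamma> * a" by (simp add: t_def a_def)
  have tpos: "t > 0" using g a1 t_def' by simp
  have tj: "t ^ j = \<gamma> ^ j * real n ^ (j - 1)" by (simp add: t_def' power_mult_distrib aj)
  have g_le_t: "\<gamma> \<le> t" using g a1 t_def' by (simp add: mult_le_cancel_left1)
  have s_le: "real s \<le> t" using tpos by (simp add: s_def)
  have s_gt: "t < real s + 1" using tpos by (simp add: s_def)
  have Tle: "real (T j w) \<le> t \<longleftrightarrow> T j w \<le> s" for w
  proof
    assume "real (T j w) \<le> t"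
    then have "real (T j w) < real s + 1" using s_gt by linarith
    then show "T j w \<le> s" by linarith
  next
    assume "T j w \<le> s"
    then show "real (T j w) \<le> t" using s_le by linarith
  qed
  have finW: "finite W" by (simp add: W_def words_finite)
  have neW: "W \<noteq> {}" by (simp add: W_def words_ne)
  have Nwpos: "Nw > 0" using finW neW by (simp add: Nw_def card_gt_0_iff)
  define Ev where "Ev = {w\<in>W. t < real (T j w)}"
  define Evc where "Evc = {w\<in>W. \<not> t < real (T j w)}"
  have P_eq: "P = real (card Ev) / Nw"
  proof -
    have "W \<inter> {w. real (T j w) > t} = Ev" by (auto simp: Ev_def)
    then show ?thesis unfolding P_def using finW neW
      by (simp add: measure_pmf_of_set W_def Nw_def)
  qed
  have cEv: "real (card Ev) + real (card Evc) = Nw"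
  proof -
    have "card Ev + card Evc = card W"
      using card_split_filter[OF finW, of "\<lambda>w. t < real (T j w)"] unfolding Ev_def Evc_def .
    then have "real (card Ev + card Evc) = Nw" by (simp add: Nw_def)
    then show ?thesis by simp
  qed
  have EvN: "real (card Ev) \<le> Nw" using cEv by linarith
  have P01: "0 \<le> P" "P \<le> 1" using Nwpos EvN by (simp_all add: P_eq divide_le_eq_1)
  have oneP: "1 - P = real (card Evc) / Nw" using cEv Nwpos P_eq by (simp add: field_simps)
  have E1: "Evc \<subseteq> {w\<in>W. \<exists>i\<in>{1..n}. \<exists>J\<in>Js j s'. \<forall>p\<in>J. w!p = i}"
  proof (rule subsetI)
    fix w assume w: "w \<in> Evc"
    have wW: "w \<in> W" using w by (simp add: Evc_def)
    have "\<not> t < real (T j w)" using w by (simp add: Evc_def)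
    then have Ts: "T j w \<le> s" using Tle[of w] by linarith
    have c1: "j \<le> count (mset w) 1" using words_count[of w m n 1] wW n1 jm by (simp add: W_def)
    obtain i J where J: "J \<subseteq> {..<min s (length w)}" "card J = j" "\<forall>p\<in>J. w!p = i"
      using T_witness[OF j1 c1 Ts] by blast
    have len: "length w = L" using wW by (simp add: W_def L_def words_length)
    have "J \<noteq> {}"
    proof
      assume "J = {}"
      then show False using J(2) j1 by simp
    qed
    then obtain p where p: "p \<in> J" by blast
    then have "p < length w" using J(1) by auto
    then have "w!p \<in> set w" by (rule nth_mem)
    moreover have "w!p = i" using J(3) p by blast
    moreover have "set w \<subseteq> {1..n}" using words_set[of w m n] wW by (simp add: W_def)
    ultimately have "i \<in> {1..n}" by blast
    moreover have "J \<in> Js j s'" using J(1,2) len by (simp add: Js_def s'_def)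
    ultimately show "w \<in> {w\<in>W. \<exists>i\<in>{1..n}. \<exists>J\<in>Js j s'. \<forall>p\<in>J. w!p = i}" using J(3) wW by blast
  qed
  have E2: "Ev \<subseteq> {w\<in>W. \<forall>i\<in>{1..n}. \<forall>J\<in>Js j s'. \<not>(\<forall>p\<in>J. w!p = i)}"
  proof (rule subsetI)
    fix w assume w: "w \<in> Ev"
    have wW: "w \<in> W" using w by (simp add: Ev_def)
    have len: "length w = L" using wW by (simp add: W_def L_def words_length)
    have "\<not>(\<forall>p\<in>J. w!p = i)" if i: "i \<in> {1..n}" and J: "J \<in> Js j s'" for i J
    proof
      assume mono: "\<forall>p\<in>J. w!p = i"
      have J1: "J \<subseteq> {..<s'}" "card J = j" using J by (auto simp: Js_def)
      have J2: "J \<subseteq> {..<length w}" using J1(1) len by (auto simp: s'_def)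
      have "T j w \<le> s'" using T_le_J[OF j1 J1(1) J2 J1(2) mono] .
      then have "T j w \<le> s" by (simp add: s'_def)
      then have "real (T j w) \<le> t" using Tle[of w] by simp
      then show False using w by (simp add: Ev_def)
    qed
    then show "w \<in> {w\<in>W. \<forall>i\<in>{1..n}. \<forall>J\<in>Js j s'. \<not>(\<forall>p\<in>J. w!p = i)}" using wW by blast
  qed
  have C1: "1 \<le> C"
  proof -
    have "0 \<le> real (m choose j) * (2 * real j * real m)^j / ff m j" using ffmj by simp
    moreover have "0 \<le> (2::real)^(j+1) * real j * real m^j" by simp
    moreover have "0 \<le> (2 * real j)^j" by simp
    ultimately show ?thesis unfolding C_def by linarith
  qed
  have partA: "1 - P \<le> \<gamma>^j"
  proof -
    have s'L: "s' \<le> m * n" by (simp add: s'_def L_def)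
    have "real (card Evc) \<le> real (card {w\<in>W. \<exists>i\<in>{1..n}. \<exists>J\<in>Js j s'. \<forall>p\<in>J. w!p = i})"
      using E1 finW by (intro of_nat_mono card_mono) auto
    also have "\<dots> \<le> real n * real (s' choose j) * (Nw * ff m j / ff L j)"
      using union_bound[OF s'L jm n1] by (simp add: W_def Nw_def L_def)
    also have "\<dots> \<le> Nw * \<gamma>^j"
    proof -
      have b1: "real (s' choose j) \<le> t ^ j"
      proof (cases "j \<le> s'")
        case True
        then have "real (s' choose j) \<le> real s' ^ j" using binomial_le_pow[of j s'] by (metis of_nat_le_iff of_nat_power)
        also have "\<dots> \<le> t ^ j" using s_le by (intro power_mono) (auto simp: s'_def)
        finally show ?thesis .
      next
        case False
        then have "s' < j" by simp
        then have "s' choose j = 0" by (rule binomial_eq_0)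
        then have z: "real (s' choose j) = 0" by (simp only: of_nat_0)
        have "0 \<le> t ^ j" using tpos by simp
        then show ?thesis by (subst z)
      qed
      have b2: "ff m j / ff L j \<le> 1 / real n ^ j"
        using ff_upper_n[OF n1 jm] ffLj n1 by (simp add: field_simps L_def)
      have "real n * real (s' choose j) * (Nw * ff m j / ff L j) = Nw * (real n * real (s' choose j) * (ff m j / ff L j))"
        by simp
      also have "\<dots> \<le> Nw * (real n * t^j * (1 / real n ^ j))"
        using b1 b2 Nwpos ffmj ffLj by (intro mult_left_mono mult_mono) auto
      also have "real n * t^j * (1 / real n ^ j) = \<gamma>^j"
        using n1 by (simp add: tj field_simps nj[symmetric])
      finally show ?thesis by simp
    qed
    finally have "real (card Evc) \<le> Nw * \<gamma>^j" .
    then have "real (card Evc) / Nw \<le> \<gamma>^j" using Nwpos by (simp add: divide_le_eq mult.commute)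
    then show ?thesis using oneP by simp
  qed
  have A: "\<bar>1 - P\<bar> \<le> C * \<gamma>^j"
  proof -
    have "\<bar>1 - P\<bar> = 1 - P" using P01 by simp
    also have "\<dots> \<le> 1 * \<gamma>^j" using partA by simp
    also have "\<dots> \<le> C * \<gamma>^j" using C1 g by (intro mult_right_mono) auto
    finally show ?thesis .
  qed
  have B: "P \<le> C * (1/\<gamma>)^j"
  proof (cases "\<gamma> < 2 * real j")
    case True
    have "1 \<le> (2 * real j / \<gamma>)^j" using True g by (intro one_le_power) (simp add: field_simps)
    also have "\<dots> = (2 * real j)^j * (1/\<gamma>)^j" by (simp add: power_divide field_simps)
    also have "\<dots> \<le> C * (1/\<gamma>)^j"
    proof (intro mult_right_mono)
      show "(2 * real j)^j \<le> C"
      proof -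
        have "0 \<le> real (m choose j) * (2 * real j * real m)^j / ff m j" using ffmj by simp
        moreover have "0 \<le> (2::real)^(j+1) * real j * real m^j" by simp
        ultimately show ?thesis unfolding C_def by linarith
      qed
    qed (use g in simp)
    finally show ?thesis using P01 by linarith
  next
    case False
    then have g2: "2 * real j \<le> \<gamma>" by simp
    have t2: "2 * real j \<le> t" using g2 g_le_t by linarith
    show ?thesis
    proof (cases "L \<le> s")
      case True
      have "Ev = {}"
      proof (rule ccontr)
        assume "Ev \<noteq> {}"
        then obtain w where w: "w \<in> Ev" by blast
        then have wW: "w \<in> W" by (simp add: Ev_def)
        have len: "length w = L" using wW by (simp add: W_def L_def words_length)
        have "j \<le> count (mset (take L w)) 1" using words_count[of w m n 1] wW n1 jm len by (simp add: W_def)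
        then have "T j w \<le> L" using T_le_core[OF j1] by blast
        then have "T j w \<le> s" using True by simp
        then have "real (T j w) \<le> t" using Tle[of w] by simp
        then show False using w by (simp add: Ev_def)
      qed
      then have "P = 0" using P_eq by simp
      then show ?thesis using C1 g by simp
    next
      case False
      then have s's: "s' = s" and sL: "s < L" by (auto simp: s'_def)
      have s_half: "t / 2 \<le> real s" using s_gt t2 j1 by (simp add: field_simps)
      have js: "j \<le> s"
      proof -
        have "real j \<le> t / 2" using t2 by simp
        then show ?thesis using s_half by linarith
      qed
      define q1 where "q1 = ff m j / ff L j"
      define \<mu> where "\<mu> = real n * real (s choose j) * q1"
      define K where "K = ff m j / (2 * real j * real m)^j"
      have SM: "real (card Ev) \<le> Nw * (real (m choose j) / \<mu> + 2^j * (2 * real j / real L))"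
      proof -
        have "real (card Ev) \<le> real (card {w\<in>W. \<forall>i\<in>{1..n}. \<forall>J\<in>Js j s'. \<not>(\<forall>p\<in>J. w!p = i)})"
          using E2 finW by (intro of_nat_mono card_mono) auto
        also have "\<dots> \<le> Nw * (real (m choose j) / \<mu> + 2^j * (2 * real j / real L))"
          using second_moment[OF j1 jm n1 js _ ] sL L4 s's
          by (simp add: W_def Nw_def \<mu>_def q1_def L_def)
        finally show ?thesis .
      qed
      have Kpos: "K > 0" using ffmj j1 m1 by (simp add: K_def)
      have mu_ge: "K * \<gamma>^j \<le> \<mu>"
      proof -
        have c1: "(t / (2 * real j))^j \<le> real (s choose j)"
        proof -
          have "(t / (2 * real j))^j \<le> (real s / real j)^j"
            using s_half tpos j1 by (intro power_mono) (auto simp: field_simps)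
          also have "\<dots> \<le> real (s choose j)" using binomial_ge_n_over_k_pow_k[OF js] by simp
          finally show ?thesis .
        qed
        have c2: "ff m j / (real m * real n)^j \<le> q1"
        proof -
          have "ff L j \<le> real L ^ j" using L4 by (intro ff_le_pow) simp
          then show ?thesis unfolding q1_def using ffLj ffmj
            by (simp add: L_def frac_le)
        qed
        have "K * \<gamma>^j = real n * (t / (2 * real j))^j * (ff m j / (real m * real n)^j)"
          using n1 m1 j1 by (simp add: K_def tj power_divide power_mult_distrib field_simps nj[symmetric])
        also have "\<dots> \<le> real n * real (s choose j) * q1"
          using c1 c2 ffmj tpos by (intro mult_mono mult_left_mono) auto
        finally show ?thesis by (simp add: \<mu>_def)
      qed
      have mupos: "\<mu> > 0" using mu_ge Kpos g by (smt (verit) zero_less_power mult_pos_pos)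
      have b1: "real (m choose j) / \<mu> \<le> real (m choose j) * (2 * real j * real m)^j / ff m j * (1/\<gamma>)^j"
      proof -
        have "real (m choose j) / \<mu> \<le> real (m choose j) / (K * \<gamma>^j)"
          using mu_ge Kpos g mupos by (intro divide_left_mono) (auto intro!: mult_pos_pos)
        also have "\<dots> = real (m choose j) * (2 * real j * real m)^j / ff m j * (1/\<gamma>)^j"
          using ffmj g by (simp add: K_def power_one_over field_simps)
        finally show ?thesis .
      qed
      have b2: "2^j * (2 * real j / real L) \<le> 2^(j+1) * real j * real m^j * (1/\<gamma>)^j"
      proof -
        have "t < real L" using s_gt sL by linarith
        then have "t^j < real L ^ j" using tpos j1 by (intro power_strict_mono) auto
        then have "\<gamma>^j * real n ^ (j - 1) < real m ^ j * real n ^ j" by (simp add: tj L_def power_mult_distrib)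
        then have "\<gamma>^j * real n ^ (j - 1) < real m ^ j * (real n * real n ^ (j - 1))" by (simp only: nj)
        then have gj: "\<gamma>^j < real m ^ j * real n" using n1 by (simp add: field_simps)
        have "2 * real j / real L \<le> 2 * real j / real n"
          using m1 n1 by (intro divide_left_mono) (auto simp: L_def)
        also have "\<dots> \<le> 2 * real j * (real m ^ j / \<gamma>^j)"
        proof -
          have "1 / real n \<le> real m ^ j / \<gamma>^j" using gj g n1 by (simp add: field_simps)
          then have "2 * real j * (1 / real n) \<le> 2 * real j * (real m ^ j / \<gamma>^j)" by (intro mult_left_mono) auto
          then show ?thesis by simp
        qed
        finally have "2^j * (2 * real j / real L) \<le> 2^j * (2 * real j * (real m ^ j / \<gamma>^j))"
          by (intro mult_left_mono) auto
        also have "\<dots> = 2^(j+1) * real j * real m^j * (1/\<gamma>)^j" by (simp add: power_one_over field_simps)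
        finally show ?thesis .
      qed
      have "P \<le> real (m choose j) / \<mu> + 2^j * (2 * real j / real L)"
      proof -
        have "real (card Ev) / Nw \<le> real (m choose j) / \<mu> + 2^j * (2 * real j / real L)"
          using SM Nwpos by (simp add: divide_le_eq mult.commute)
        then show ?thesis using P_eq by simp
      qed
      also have "\<dots> \<le> (real (m choose j) * (2 * real j * real m)^j / ff m j + 2^(j+1) * real j * real m^j) * (1/\<gamma>)^j"
        using b1 b2 by (simp add: distrib_right)
      also have "\<dots> \<le> C * (1/\<gamma>)^j"
      proof (intro mult_right_mono)
        show "real (m choose j) * (2 * real j * real m)^j / ff m j + 2^(j+1) * real j * real m^j \<le> C"
          unfolding C_def by simp
      qed (use g in simp)
      finally show ?thesis .
    qed
  qed
  show ?thesis using A B by blast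
qed

theorem lemma2p1:
  fixes m j :: nat
  assumes "1 \<le> j" and "j \<le> m"
  shows "\<exists>C>0. \<exists>N. \<forall>n\<ge>N. \<forall>\<gamma>::real. \<gamma> > 0 \<longrightarrow>
           (let t = \<gamma> * real n powr (1 - 1 / real j);
                P = measure_pmf.prob (pmf_of_set (words m n)) {w. real (T j w) > t}
            in \<bar>1 - P\<bar> \<le> C * \<gamma> ^ j \<and> P \<le> C * (1 / \<gamma>) ^ j)"
proof -
  define C where "C = 1 + (2 * real j)^j + real (m choose j) * (2 * real j * real m)^j / ff m j
                + 2^(j+1) * real j * real m^j"
  have Cpos: "C > 0"
  proof -
    have "0 \<le> real (m choose j) * (2 * real j * real m)^j / ff m j" using ff_pos[OF assms(2)] by simp
    moreover have "0 \<le> (2::real)^(j+1) * real j * real m^j" by simp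
    moreover have "0 \<le> (2 * real j)^j" by simp
    ultimately show ?thesis unfolding C_def by linarith
  qed
  have "\<forall>n\<ge>4*j. \<forall>\<gamma>::real. \<gamma> > 0 \<longrightarrow>
           (let t = \<gamma> * real n powr (1 - 1 / real j);
                P = measure_pmf.prob (pmf_of_set (words m n)) {w. real (T j w) > t}
            in \<bar>1 - P\<bar> \<le> C * \<gamma> ^ j \<and> P \<le> C * (1 / \<gamma>) ^ j)"
    unfolding Let_def C_def using core[OF assms] by blast
  then show ?thesis using Cpos by blast
qed

end
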